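(* Let $k\geq 0$ be fixed and consider the one-parameter family of maps $f(x,r)=x^2\exp(r-x)+k$ with bifurcation parameter $r\in\mathbb{R}$. Let \[ x_0=\frac{k+3+\sqrt{k^2-2k+9}}{2},\qquad r_0=x_0-\ln\big(x_0(x_0-2)\big)\quad\Big(\text{equivalently } r_0=x_0+\ln\big((x_0-k)/x_0^2\big)\Big). \] Then $x_0$ is a fixed point of $f(\cdot,r_0)$ and the family undergoes a supercritical flip bifurcation at the fixed point $x_0$ for the bifurcation value $r=r_0$.
   Context: For a smooth one-parameter family $x\mapsto f(x,a)$ of maps of $\mathbb{R}$ with a fixed point $x_0$ at $a=a_0$, one says that a flip (period-doubling) bifurcation occurs at $x_0$ for $a=a_0$ if $\frac{\partial f}{\partial x}(x_0,a_0)=-1$ and the nondegeneracy conditions (B.1) $\mathcal{Q}f(x_0,a_0):=\frac12\big(\frac{\partial^2 f}{\partial x^2}(x_0,a_0)\big)^2+\frac13\frac{\partial^3 f}{\partial x^3}(x_0,a_0)\neq 0$ and (B.2) $\frac{\partial^2 f}{\partial x\partial a}(x_0,a_0)\neq0$ hold; then smooth invertible changes of coordinates and parameter transform the system into $\eta\mapsto-(1+\beta)\eta\pm\eta^3+O(\eta^4)$. The flip bifurcation is called supercritical if $\mathcal{Q}f(x_0,a_0)>0$ (the fixed point loses stability and a stable period-2 orbit emerges). *)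

theory Defs
  imports "HOL-Analysis.Analysis"
begin

definition px :: "(real \<Rightarrow> real \<Rightarrow> real) \<Rightarrow> real \<Rightarrow> real \<Rightarrow> real" where
  "px f x a = deriv (\<lambda>y. f y a) x"

definition pxx :: "(real \<Rightarrow> real \<Rightarrow> real) \<Rightarrow> real \<Rightarrow> real \<Rightarrow> real" where
  "pxx f x a = deriv (\<lambda>y. px f y a) x"

definition pxxx :: "(real \<Rightarrow> real \<Rightarrow> real) \<Rightarrow> real \<Rightarrow> real \<Rightarrow> real" where
  "pxxx f x a = deriv (\<lambda>y. pxx f y a) x"

definition pxa :: "(real \<Rightarrow> real \<Rightarrow> real) \<Rightarrow> real \<Rightarrow> real \<Rightarrow> real" where
  "pxa f x a = deriv (\<lambda>b. px f x b) a"

definition Qf :: "(real \<Rightarrow> real \<Rightarrow> real) \<Rightarrow> real \<Rightarrow> real \<Rightarrow> real" where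
  "Qf f x a = (pxx f x a)\<^sup>2 / 2 + pxxx f x a / 3"

definition regular_family :: "(real \<Rightarrow> real \<Rightarrow> real) \<Rightarrow> bool" where
  "regular_family f \<longleftrightarrow>
     continuous_on UNIV (\<lambda>(x, a). f x a) \<and>
     (\<forall>x a. (\<lambda>y. f y a) differentiable at x \<and>
            (\<lambda>y. px f y a) differentiable at x \<and>
            (\<lambda>y. pxx f y a) differentiable at x \<and>
            (\<lambda>b. px f x b) differentiable at a)"

definition flip_bifurcation :: "(real \<Rightarrow> real \<Rightarrow> real) \<Rightarrow> real \<Rightarrow> real \<Rightarrow> bool" where
  "flip_bifurcation f x0 a0 \<longleftrightarrow>
     regular_family f \<and> f x0 a0 = x0 \<and>
     px f x0 a0 = -1 \<and> Qf f x0 a0 \<noteq> 0 \<and> pxa f x0 a0 \<noteq> 0"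

definition supercritical_flip_bifurcation :: "(real \<Rightarrow> real \<Rightarrow> real) \<Rightarrow> real \<Rightarrow> real \<Rightarrow> bool" where
  "supercritical_flip_bifurcation f x0 a0 \<longleftrightarrow>
     flip_bifurcation f x0 a0 \<and> Qf f x0 a0 > 0"

end

theory Submission
  imports Defs
begin


lemma d1: "((\<lambda>y. y\<^sup>2 * exp (a - y) + (k::real)) has_real_derivative (2*x - x\<^sup>2) * exp (a - x)) (at x)"
  by (auto intro!: derivative_eq_intros simp: algebra_simps power2_eq_square)

lemma px_eq: "px (\<lambda>x r. x\<^sup>2 * exp (r - x) + (k::real)) y a = (2*y - y\<^sup>2) * exp (a - y)"
  unfolding px_def by (rule DERIV_imp_deriv[OF d1])

lemma d2: "((\<lambda>y. (2*y - y\<^sup>2) * exp (a - y)) has_real_derivative (2 - 4*x + x\<^sup>2) * exp (a - x)) (at x)"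
  by (auto intro!: derivative_eq_intros simp: algebra_simps power2_eq_square)

lemma pxx_eq: "pxx (\<lambda>x r. x\<^sup>2 * exp (r - x) + (k::real)) y a = (2 - 4*y + y\<^sup>2) * exp (a - y)"
  unfolding pxx_def px_eq by (rule DERIV_imp_deriv[OF d2])

lemma d3: "((\<lambda>y. (2 - 4*y + y\<^sup>2) * exp (a - y)) has_real_derivative (-6 + 6*x - x\<^sup>2) * exp (a - x)) (at x)"
  by (auto intro!: derivative_eq_intros simp: algebra_simps power2_eq_square)

lemma pxxx_eq: "pxxx (\<lambda>x r. x\<^sup>2 * exp (r - x) + (k::real)) y a = (-6 + 6*y - y\<^sup>2) * exp (a - y)"
  unfolding pxxx_def pxx_eq by (rule DERIV_imp_deriv[OF d3])

lemma d4: "((\<lambda>b. (2*y - y\<^sup>2) * exp (b - y)) has_real_derivative (2*y - y\<^sup>2) * exp (a - y)) (at a)"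
  by (auto intro!: derivative_eq_intros simp: algebra_simps power2_eq_square)

lemma pxa_eq: "pxa (\<lambda>x r. x\<^sup>2 * exp (r - x) + (k::real)) y a = (2*y - y\<^sup>2) * exp (a - y)"
  unfolding pxa_def px_eq by (rule DERIV_imp_deriv[OF d4])

lemma reg: "regular_family (\<lambda>x r. x\<^sup>2 * exp (r - x) + (k::real))"
  unfolding regular_family_def px_eq pxx_eq
proof (intro conjI allI)
  have "continuous_on UNIV (\<lambda>p::real\<times>real. (fst p)\<^sup>2 * exp (snd p - fst p) + k)"
    by (intro continuous_intros)
  then show "continuous_on UNIV (\<lambda>(x, a). x\<^sup>2 * exp (a - x) + k)"
    by (simp add: case_prod_beta')
qed (use d1 d2 d3 d4 real_differentiable_def in blast)+

lemma poly_pos: "(t::real) > 0 \<Longrightarrow> 3*(t^2-2)^2 + 2*(t^2+2*t)*(2*t+2-t^2) > 0"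
proof -
  assume "t > 0"
  have "3*(t^2-2)^2 + 2*(t^2+2*t)*(2*t+2-t^2) = t^4 + 8*t + 12"
    by (simp add: algebra_simps power2_eq_square power4_eq_xxxx)
  moreover have "t^4 \<ge> 0" by simp
  ultimately show ?thesis using \<open>t>0\<close> by linarith
qed

theorem theorem2p2:
  fixes k x0 r0 :: real
  assumes "k \<ge> 0"
    and "x0 = (k + 3 + sqrt (k\<^sup>2 - 2 * k + 9)) / 2"
    and "r0 = x0 - ln (x0 * (x0 - 2))"
  shows "(\<lambda>x r. x\<^sup>2 * exp (r - x) + k) x0 r0 = x0 \<and>
         supercritical_flip_bifurcation (\<lambda>x r. x\<^sup>2 * exp (r - x) + k) x0 r0"
proof -
  define s where "s = sqrt (k\<^sup>2 - 2 * k + 9)"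
  have nn: "0 \<le> k\<^sup>2 - 2 * k + 9"
  proof -
    have "k\<^sup>2 - 2 * k + 9 = (k-1)^2 + 8" by (simp add: power2_eq_square algebra_simps)
    thus "0 \<le> k\<^sup>2 - 2 * k + 9" by (smt (verit) zero_le_power2)
  qed
  have s2: "s^2 = k\<^sup>2 - 2 * k + 9" unfolding s_def using nn by simp
  have s0: "s \<ge> 0" unfolding s_def using nn by simp
  have s1: "s > 1" 
  proof -
    have "k\<^sup>2 - 2 * k + 9 = (k-1)^2 + 8" by (simp add: power2_eq_square algebra_simps)
    hence "s^2 > 1" using s2 zero_le_power2[of "k-1"] by linarith
    thus ?thesis using s0 power_le_one[of s 2] by linarith
  qed
  have x0: "x0 = (k + 3 + s)/2" using assms(2) s_def by simp
  have gt2: "x0 > 2" unfolding x0 using s1 assms(1) by (simp add: field_simps)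
  define D where "D = x0 * (x0 - 2)"
  have Dpos: "D > 0" using gt2 D_def by simp
  have E: "exp (r0 - x0) = 1 / D" using assms(3) Dpos D_def
    by (simp add: exp_minus divide_inverse)
  have quad: "x0^2 - (k+3)*x0 + 2*k = 0"
  proof -
    have "4*(x0^2 - (k+3)*x0 + 2*k) = s^2 - (k\<^sup>2 - 2 * k + 9)"
      unfolding x0 by (simp add: power2_eq_square field_simps)
    thus ?thesis using s2 by simp
  qed
  have fixpt: "x0\<^sup>2 * exp (r0 - x0) + k = x0"
  proof -
    have "x0\<^sup>2 * exp (r0 - x0) + k = (x0^2 + k*D)/D" using E Dpos by (simp add: field_simps)
    also have "x0^2 + k*D = x0 * D"
    proof -
      have "x0*D - (x0^2+k*D) = x0*(x0^2-(k+3)*x0+2*k)"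
        by (simp add: D_def algebra_simps power2_eq_square)
      thus ?thesis using quad by simp
    qed
    finally show ?thesis using Dpos by simp
  qed
  have negD: "2*x0 - x0\<^sup>2 = -D" by (simp add: D_def algebra_simps power2_eq_square)
  have pxv: "px (\<lambda>x r. x\<^sup>2 * exp (r - x) + k) x0 r0 = -1"
    unfolding px_eq E negD using Dpos by simp
  have pxav: "pxa (\<lambda>x r. x\<^sup>2 * exp (r - x) + k) x0 r0 = -1"
    unfolding pxa_eq E negD using Dpos by simp
  define t where "t = x0 - 2"
  have t0: "t > 0" using gt2 t_def by simp
  have Dt: "D = t^2 + 2*t" unfolding D_def t_def by (simp add: algebra_simps power2_eq_square)
  have Q: "Qf (\<lambda>x r. x\<^sup>2 * exp (r - x) + k) x0 r0
     = (3*(t^2-2)^2 + 2*(t^2+2*t)*(2*t+2-t^2)) / (6*D^2)"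
  proof -
    have a: "(2 - 4*x0 + x0\<^sup>2) = t^2 - 2" unfolding t_def by (simp add: algebra_simps power2_eq_square)
    have b: "(-6 + 6*x0 - x0\<^sup>2) = 2*t+2-t^2" unfolding t_def by (simp add: algebra_simps power2_eq_square)
    have "Qf (\<lambda>x r. x\<^sup>2 * exp (r - x) + k) x0 r0 = ((t^2-2)/D)^2/2 + ((2*t+2-t^2)/D)/3"
      unfolding Qf_def pxx_eq pxxx_eq E a b by simp
    also have "\<dots> = (3*(t^2-2)^2 + 2*D*(2*t+2-t^2)) / (6*D^2)"
      using Dpos by (simp add: field_simps power2_eq_square)
    finally show ?thesis unfolding Dt .
  qed
  have Qpos: "Qf (\<lambda>x r. x\<^sup>2 * exp (r - x) + k) x0 r0 > 0"
    unfolding Q using poly_pos[OF t0] Dpos by simp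
  show ?thesis
    unfolding supercritical_flip_bifurcation_def flip_bifurcation_def
    using fixpt pxv pxav Qpos reg by simp
qed

end
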